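(* Let $M\in S_d^+$, let $z,v\in\mathbb R^d\setminus\{0\}$ and $\theta_0\in[0,\pi/2]$ be such that $\langle v,z-v\rangle_M\ge\cos(\theta_0)\|v\|_M\|z-v\|_M$. Then $$\|z-v\|_M\le\|z\|_M-\frac{\langle z,v\rangle_M}{\|z\|_M}+\frac{(\sin\theta_0)^2\|v\|_M^2}{\|z\|_M}.$$
   Context: $S_d^+$ is the set of $d\times d$ symmetric positive definite matrices; $\langle u,v\rangle_M:=u^TMv$, $\|u\|_M:=\sqrt{\langle u,u\rangle_M}$. *)

theory Defs
  imports "HOL-Analysis.Analysis"
begin

definition sym_posdef :: "real^'n^'n \<Rightarrow> bool" where
  "sym_posdef M \<longleftrightarrow> transpose M = M \<and> (\<forall>x. x \<noteq> 0 \<longrightarrow> x \<bullet> (M *v x) > 0)"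

definition inner_M :: "real^'n^'n \<Rightarrow> real^'n \<Rightarrow> real^'n \<Rightarrow> real" where
  "inner_M M u v = u \<bullet> (M *v v)"

definition norm_M :: "real^'n^'n \<Rightarrow> real^'n \<Rightarrow> real" where
  "norm_M M u = sqrt (inner_M M u u)"

end

theory Submission
  imports Defs
begin

lemma innerM_sym:
  assumes "transpose M = M"
  shows "inner_M M u w = inner_M M w u"
proof -
  have "u \<bullet> (M *v w) = (u v* M) \<bullet> w" by (simp add: dot_lmul_matrix)
  also have "u v* M = transpose M *v u" by (metis transpose_transpose vector_transpose_matrix)
  also have "\<dots> = M *v u" using assms by simp
  finally show ?thesis unfolding inner_M_def by (simp add: inner_commute)
qed

lemma innerM_diff_right: "inner_M M u (w - x) = inner_M M u w - inner_M M u x"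
  unfolding inner_M_def by (simp add: matrix_vector_mult_diff_distrib inner_diff_right)

lemma innerM_diff_left: "inner_M M (w - x) u = inner_M M w u - inner_M M x u"
  unfolding inner_M_def by (simp add: inner_diff_left)

theorem lemma1p7:
  fixes M :: "real^'n^'n" and z v :: "real^'n" and \<theta>\<^sub>0 :: real
  assumes "sym_posdef M"
    and "z \<noteq> 0" and "v \<noteq> 0"
    and "0 \<le> \<theta>\<^sub>0" and "\<theta>\<^sub>0 \<le> pi / 2"
    and "inner_M M v (z - v) \<ge> cos \<theta>\<^sub>0 * norm_M M v * norm_M M (z - v)"
  shows "norm_M M (z - v) \<le> norm_M M z - inner_M M z v / norm_M M z
           + (sin \<theta>\<^sub>0)\<^sup>2 * (norm_M M v)\<^sup>2 / norm_M M z"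
proof -
  have sym: "transpose M = M" and pd: "\<And>x. x \<noteq> 0 \<Longrightarrow> inner_M M x x > 0"
    using assms(1) unfolding sym_posdef_def inner_M_def by auto
  have nn: "inner_M M x x \<ge> 0" for x
    using pd[of x] by (cases "x = 0") (auto simp: inner_M_def)
  have sq: "(norm_M M x)^2 = inner_M M x x" for x
    unfolding norm_M_def using nn[of x] by simp
  define a where "a = norm_M M v"
  define b where "b = norm_M M (z - v)"
  define N where "N = norm_M M z"
  define p where "p = inner_M M v (z - v)"
  define c where "c = cos \<theta>\<^sub>0"
  define s where "s = sin \<theta>\<^sub>0"
  have a0: "a \<ge> 0" "b \<ge> 0" unfolding a_def b_def norm_M_def using nn by auto
  have Npos: "N > 0" unfolding N_def norm_M_def using pd[OF assms(2)] by simp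
  have c0: "c \<ge> 0" unfolding c_def using assms(4,5) by (simp add: cos_ge_zero)
  have cs: "c^2 + s^2 = 1" unfolding c_def s_def by simp
  have hp: "p \<ge> c * a * b" using assms(6) unfolding p_def c_def a_def b_def by simp
  have p0: "p \<ge> 0" using hp c0 a0 by (meson mult_nonneg_nonneg order_trans)
  have zv: "inner_M M z v = a^2 + p"
    unfolding a_def p_def sq innerM_diff_right using innerM_sym[OF sym, of z v] by simp
  have NN: "N^2 = a^2 + 2*p + b^2"
    unfolding a_def b_def p_def N_def sq innerM_diff_right innerM_diff_left
    using innerM_sym[OF sym, of z v] by simp
  have p2: "p^2 \<ge> (c*a*b)^2"
    using hp a0 c0 by (intro power_mono) auto
  have key: "(b*N)^2 \<le> (p + b^2 + s^2*a^2)^2"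
  proof -
    define X where "X = s^2*a^2"
    define B where "B = b^2"
    have X0: "X \<ge> 0" unfolding X_def by simp
    have e1: "(b*N)^2 = B*a^2 + 2*(p*B) + B*B" unfolding B_def by (simp add: power_mult_distrib NN algebra_simps)
    have e2: "(c*a*b)^2 = B*a^2 - X*B"
    proof -
      have "c^2 = 1 - s^2" using cs by simp
      have "(c*a*b)^2 = c^2*(a^2*b^2)" by (simp add: power_mult_distrib)
      also have "\<dots> = (1 - s^2)*(a^2*b^2)" using \<open>c^2 = 1 - s^2\<close> by simp
      finally show ?thesis unfolding X_def B_def by (simp add: algebra_simps)
    qed
    have e3: "(p + B + X)^2 = p^2 + 2*(p*B) + B*B + 2*(X*p) + 2*(X*B) + X*X"
      by (simp add: power2_eq_square algebra_simps)
    have f1: "0 \<le> X*p" using X0 p0 by simp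
    have f2: "0 \<le> X*B" using X0 unfolding B_def by simp
    have f3: "0 \<le> X*X" by simp
    have "(b*N)^2 \<le> (p + B + X)^2" unfolding e1 e3 using p2 e2 f1 f2 f3 by linarith
    thus ?thesis unfolding X_def B_def .
  qed
  have "b*N \<le> p + b^2 + s^2*a^2"
  proof -
    have "0 \<le> s^2*a^2" by simp
    hence nn2: "0 \<le> p + b^2 + s^2*a^2" using p0 by (meson add_nonneg_nonneg zero_le_power2)
    show ?thesis by (rule power2_le_imp_le[OF key nn2])
  qed
  hence h: "b*N \<le> N^2 - (a^2 + p) + s^2*a^2" using NN by linarith
  have "b \<le> (N^2 - (a^2 + p) + s^2*a^2) / N"
    using h Npos by (simp add: pos_le_divide_eq)
  also have "\<dots> = N - (a^2+p)/N + s^2*a^2/N"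
    using Npos by (simp add: diff_divide_distrib add_divide_distrib power2_eq_square)
  finally have "b \<le> N - (a^2+p)/N + s^2*a^2/N" .
  thus ?thesis unfolding zv a_def b_def N_def s_def .
qed

end
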